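(* Let $A,B,C$ be C*-algebras and $\phi\colon A\to C$, $\psi\colon B\to C$ *-homomorphisms with $\phi$ surjective. Let $I\subseteq A$, $J\subseteq B$, $K\subseteq C$ be closed two-sided ideals with $\phi(I)=K$ and $\psi(J)\subseteq K$, and let $\overline\phi\colon A/I\to C/K$, $\overline\psi\colon B/J\to C/K$ be the induced maps. Then the map $$\gamma\colon (A\oplus_C B)/(I\oplus_K J)\to (A/I)\oplus_{C/K}(B/J),\qquad \gamma((a,b)+I\oplus_K J)=(a+I,\,b+J)$$ is a *-isomorphism.
   Context: For *-homomorphisms $\phi\colon A\to C$, $\psi\colon B\to C$, the pullback is $A\oplus_C B=\{(a,b)\in A\oplus B:\phi(a)=\psi(b)\}$. Here $I\oplus_K J=\{(a,b)\in A\oplus_C B: a\in I, b\in J\}$ (the pullback with respect to $\phi|_I$ and $\psi|_J$), and $(A/I)\oplus_{C/K}(B/J)$ is the pullback with respect to $\overline\phi$ and $\overline\psi$. *)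

theory Defs
  imports Complex_Main
begin

class cstar_algebra = banach + real_normed_algebra +
  fixes scaleC :: "complex \<Rightarrow> 'a \<Rightarrow> 'a"
    and adj :: "'a \<Rightarrow> 'a"
  assumes scaleC_add_right: "scaleC c (x + y) = scaleC c x + scaleC c y"
    and scaleC_add_left: "scaleC (c + d) x = scaleC c x + scaleC d x"
    and scaleC_scaleC: "scaleC c (scaleC d x) = scaleC (c * d) x"
    and scaleC_one: "scaleC 1 x = x"
    and scaleR_scaleC: "scaleR r x = scaleC (complex_of_real r) x"
    and scaleC_mult_left: "scaleC c x * y = scaleC c (x * y)"
    and scaleC_mult_right: "x * scaleC c y = scaleC c (x * y)"
    and norm_scaleC: "norm (scaleC c x) = cmod c * norm x"
    and adj_adj: "adj (adj x) = x"
    and adj_add: "adj (x + y) = adj x + adj y"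
    and adj_mult: "adj (x * y) = adj y * adj x"
    and adj_scaleC: "adj (scaleC c x) = scaleC (cnj c) (adj x)"
    and cstar_identity: "norm (adj x * x) = norm x * norm x"

text \<open>*-homomorphisms between C*-algebras (continuity is automatic).\<close>
definition cstar_hom :: "('a::cstar_algebra \<Rightarrow> 'b::cstar_algebra) \<Rightarrow> bool" where
  "cstar_hom f \<longleftrightarrow>
     (\<forall>x y. f (x + y) = f x + f y) \<and>
     (\<forall>c x. f (scaleC c x) = scaleC c (f x)) \<and>
     (\<forall>x y. f (x * y) = f x * f y) \<and>
     (\<forall>x. f (adj x) = adj (f x))"

definition closed_ideal :: "'a::cstar_algebra set \<Rightarrow> bool" where
  "closed_ideal I \<longleftrightarrow>
     closed I \<and> 0 \<in> I \<and>
     (\<forall>x\<in>I. \<forall>y\<in>I. x + y \<in> I) \<and>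
     (\<forall>c. \<forall>x\<in>I. scaleC c x \<in> I) \<and>
     (\<forall>a. \<forall>x\<in>I. a * x \<in> I \<and> x * a \<in> I)"

section \<open>*-algebras given by a carrier and operations (for quotients and pullbacks)\<close>

record 'x star_alg =
  carr :: "'x set"
  add :: "'x \<Rightarrow> 'x \<Rightarrow> 'x"
  mul :: "'x \<Rightarrow> 'x \<Rightarrow> 'x"
  smul :: "complex \<Rightarrow> 'x \<Rightarrow> 'x"
  invol :: "'x \<Rightarrow> 'x"

definition full_alg :: "'a::cstar_algebra star_alg" where
  "full_alg = \<lparr>carr = UNIV, add = (+), mul = (*), smul = scaleC, invol = adj\<rparr>"

definition pullback_alg ::
  "'x star_alg \<Rightarrow> 'y star_alg \<Rightarrow> ('x \<Rightarrow> 'z) \<Rightarrow> ('y \<Rightarrow> 'z) \<Rightarrow> ('x \<times> 'y) star_alg" where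
  "pullback_alg R S f g =
     \<lparr>carr = {(x, y). x \<in> carr R \<and> y \<in> carr S \<and> f x = g y},
      add = (\<lambda>(x, y) (x', y'). (add R x x', add S y y')),
      mul = (\<lambda>(x, y) (x', y'). (mul R x x', mul S y y')),
      smul = (\<lambda>c (x, y). (smul R c x, smul S c y)),
      invol = (\<lambda>(x, y). (invol R x, invol S y))\<rparr>"

definition coset :: "'x star_alg \<Rightarrow> 'x set \<Rightarrow> 'x \<Rightarrow> 'x set" where
  "coset R N x = {add R x n | n. n \<in> N}"

definition rep :: "'x set \<Rightarrow> 'x" where
  "rep X = (SOME x. x \<in> X)"

definition quot_alg :: "'x star_alg \<Rightarrow> 'x set \<Rightarrow> 'x set star_alg" where
  "quot_alg R N =
     \<lparr>carr = {coset R N x | x. x \<in> carr R},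
      add = (\<lambda>X Y. coset R N (add R (rep X) (rep Y))),
      mul = (\<lambda>X Y. coset R N (mul R (rep X) (rep Y))),
      smul = (\<lambda>c X. coset R N (smul R c (rep X))),
      invol = (\<lambda>X. coset R N (invol R (rep X)))\<rparr>"

definition quot_map ::
  "'x star_alg \<Rightarrow> 'x set \<Rightarrow> 'y star_alg \<Rightarrow> 'y set \<Rightarrow> ('x \<Rightarrow> 'y) \<Rightarrow> 'x set \<Rightarrow> 'y set" where
  "quot_map R N S M f X = coset S M (f (rep X))"

definition star_hom :: "'x star_alg \<Rightarrow> 'y star_alg \<Rightarrow> ('x \<Rightarrow> 'y) \<Rightarrow> bool" where
  "star_hom R S f \<longleftrightarrow>
     (\<forall>x\<in>carr R. f x \<in> carr S) \<and>
     (\<forall>x\<in>carr R. \<forall>y\<in>carr R. f (add R x y) = add S (f x) (f y)) \<and>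
     (\<forall>x\<in>carr R. \<forall>y\<in>carr R. f (mul R x y) = mul S (f x) (f y)) \<and>
     (\<forall>c. \<forall>x\<in>carr R. f (smul R c x) = smul S c (f x)) \<and>
     (\<forall>x\<in>carr R. f (invol R x) = invol S (f x))"

definition star_iso :: "'x star_alg \<Rightarrow> 'y star_alg \<Rightarrow> ('x \<Rightarrow> 'y) \<Rightarrow> bool" where
  "star_iso R S f \<longleftrightarrow> star_hom R S f \<and> bij_betw f (carr R) (carr S)"

end

theory Submission imports Defs "HOL-Analysis.Analysis" "HOL-Computational_Algebra.Polynomial" begin


lemma scaleC_zero_left[simp]: "scaleC 0 x = 0"
  using scaleR_scaleC[of 0 x] by simp

lemma scaleC_zero_right[simp]: "scaleC c 0 = 0"
  using scaleC_add_right[of c 0 0] by simp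

lemma scaleC_minus_right: "scaleC c (- x) = - scaleC c x"
proof -
  have "scaleC c x + scaleC c (- x) = 0" using scaleC_add_right[of c x "-x"] by simp
  from minus_unique[OF this] show ?thesis by simp
qed

lemma scaleC_diff_right: "scaleC c (x - y) = scaleC c x - scaleC c y"
  unfolding diff_conv_add_uminus by (simp only: scaleC_add_right scaleC_minus_right)

lemma scaleC_minus_left: "scaleC (- c) x = - scaleC c x"
proof -
  have "scaleC c x + scaleC (- c) x = 0" using scaleC_add_left[of c "-c" x] by simp
  from minus_unique[OF this] show ?thesis by simp
qed

lemma adj_zero[simp]: "adj 0 = 0"
  using adj_add[of 0 0] by simp

lemma adj_minus: "adj (- x) = - adj x"
proof -
  have "adj x + adj (- x) = 0" using adj_add[of x "-x"] by simp
  from minus_unique[OF this] show ?thesis by simp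
qed

lemma adj_diff: "adj (x - y) = adj x - adj y"
  unfolding diff_conv_add_uminus by (simp only: adj_add adj_minus)

lemma adj_scaleR: "adj (scaleR r x) = scaleR r (adj x)"
  by (simp add: scaleR_scaleC adj_scaleC)

lemma norm_adj_le: "norm x \<le> norm (adj x)"
proof (cases "x = 0")
  case False
  have "norm x * norm x = norm (adj x * x)" by (rule cstar_identity[symmetric])
  also have "\<dots> \<le> norm (adj x) * norm x" by (rule norm_mult_ineq)
  finally show ?thesis using False by simp
qed simp

lemma norm_adj[simp]: "norm (adj x) = norm x"
  using norm_adj_le[of x] norm_adj_le[of "adj x"] by (simp add: adj_adj)

lemma cstar_identity': "norm (x * adj x) = norm x * norm x"
  using cstar_identity[of "adj x"] by (simp add: adj_adj)

lemma adj_sum: "adj (sum f A) = sum (\<lambda>i. adj (f i)) A"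
  by (induction A rule: infinite_finite_induct) (auto simp: adj_add)

lemma scaleC_sum_right: "scaleC c (sum f A) = sum (\<lambda>i. scaleC c (f i)) A"
  by (induction A rule: infinite_finite_induct) (auto simp: scaleC_add_right)

lemma continuous_adj: "isCont adj x"
proof -
  have "bounded_linear adj"
    by (rule bounded_linear_intro[of _ 1]) (auto simp: adj_add adj_scaleR)
  then show ?thesis by (rule bounded_linear.isCont) (rule continuous_ident)
qed


subsection \<open>Ideals\<close>

lemma ideal_0: "closed_ideal I \<Longrightarrow> 0 \<in> I" by (simp add: closed_ideal_def)
lemma ideal_add: "closed_ideal I \<Longrightarrow> x \<in> I \<Longrightarrow> y \<in> I \<Longrightarrow> x + y \<in> I"
  by (simp add: closed_ideal_def)
lemma ideal_scaleC: "closed_ideal I \<Longrightarrow> x \<in> I \<Longrightarrow> scaleC c x \<in> I"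
  by (simp add: closed_ideal_def)
lemma ideal_multL: "closed_ideal I \<Longrightarrow> x \<in> I \<Longrightarrow> a * x \<in> I"
  by (simp add: closed_ideal_def)
lemma ideal_multR: "closed_ideal I \<Longrightarrow> x \<in> I \<Longrightarrow> x * a \<in> I"
  by (simp add: closed_ideal_def)
lemma ideal_closed: "closed_ideal I \<Longrightarrow> closed I"
  by (simp add: closed_ideal_def)
lemma ideal_minus: "closed_ideal I \<Longrightarrow> x \<in> I \<Longrightarrow> - x \<in> I"
proof -
  assume "closed_ideal I" "x \<in> I"
  then have "scaleC (- 1) x \<in> I" by (rule ideal_scaleC)
  then show ?thesis by (simp add: scaleC_minus_left scaleC_one)
qed
lemma ideal_diff: "closed_ideal I \<Longrightarrow> x \<in> I \<Longrightarrow> y \<in> I \<Longrightarrow> x - y \<in> I"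
  using ideal_add[of I x "- y"] ideal_minus[of I y] by simp
lemma ideal_scaleR: "closed_ideal I \<Longrightarrow> x \<in> I \<Longrightarrow> scaleR r x \<in> I"
  by (simp add: scaleR_scaleC ideal_scaleC)


lemma scaleC_scaleC': "scaleC c (scaleC d x) = scaleC (c * d) x" by (rule scaleC_scaleC)

definition PM :: "nat \<Rightarrow> complex poly" where "PM M = [:1,1:] * [:1,-1:]^M"

lemma coeff_Q: "coeff ([:1,-1:]^M :: complex poly) k = of_nat (M choose k) * (-1)^k"
proof (cases "k \<le> M")
  case True then show ?thesis using coeff_linear_poly_power[OF True, of 1 "-1::complex"] by simp
next
  case False
  have "degree ([:1,-1:]^M :: complex poly) \<le> M"
    using degree_power_le[of "[:1,-1::complex:]" M] by simp
  then show ?thesis using False by (simp add: coeff_eq_0 binomial_eq_0)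
qed

lemma coeff_PM: "coeff (PM M) 0 = 1" "coeff (PM M) (Suc j) = (-1)^j * (of_nat (M choose j) - of_nat (M choose Suc j))"
proof -
  have e: "PM M = [:1,-1:]^M + pCons 0 ([:1,-1:]^M)" unfolding PM_def by (simp add: mult_pCons_left)
  show "coeff (PM M) 0 = 1" unfolding e by (simp add: coeff_Q)
  show "coeff (PM M) (Suc j) = (-1)^j * (of_nat (M choose j) - of_nat (M choose Suc j))"
    unfolding e by (simp add: coeff_Q algebra_simps)
qed

lemma degree_PM: "degree (PM M) \<le> Suc M"
proof -
  have "degree ([:1,-1:]^M :: complex poly) \<le> M"
    using degree_power_le[of "[:1,-1::complex:]" M] by simp
  then show ?thesis unfolding PM_def using degree_mult_le[of "[:1,1::complex:]" "[:1,-1:]^M"] by simp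
qed

lemma telescope_bound:
  fixes m :: nat
  defines "b \<equiv> \<lambda>j. real ((2*m) choose j)"
  shows "(\<Sum>j\<le>2*m. \<bar>b j - b (Suc j)\<bar>) = 2 * b m - 1"
proof -
  have up: "\<bar>b j - b (Suc j)\<bar> = b (Suc j) - b j" if "j < m" for j
  proof -
    have "(2*m) choose j \<le> (2*m) choose (Suc j)" using that by (intro binomial_mono) auto
    then show ?thesis unfolding b_def by simp
  qed
  have down: "\<bar>b j - b (Suc j)\<bar> = b j - b (Suc j)" if "m \<le> j" for j
  proof (cases "Suc j \<le> 2*m")
    case True
    have "(2*m) choose (Suc j) \<le> (2*m) choose j" using that True by (intro binomial_antimono) auto
    then show ?thesis unfolding b_def by simp
  next
    case False
    then show ?thesis unfolding b_def by (simp add: binomial_eq_0)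
  qed
  have split: "{..2*m} = {..<m} \<union> {m..2*m}" by auto
  have "(\<Sum>j\<le>2*m. \<bar>b j - b (Suc j)\<bar>) = (\<Sum>j<m. \<bar>b j - b (Suc j)\<bar>) + (\<Sum>j=m..2*m. \<bar>b j - b (Suc j)\<bar>)"
    unfolding split by (rule sum.union_disjoint) auto
  also have "(\<Sum>j<m. \<bar>b j - b (Suc j)\<bar>) = (\<Sum>j<m. b (Suc j) - b j)" by (rule sum.cong) (auto simp: up)
  also have "\<dots> = b m - b 0" by (rule sum_lessThan_telescope)
  also have "(\<Sum>j=m..2*m. \<bar>b j - b (Suc j)\<bar>) = (\<Sum>j=m..2*m. b j - b (Suc j))" by (rule sum.cong) (auto simp: down)
  also have "\<dots> = - (\<Sum>j=m..2*m. b (Suc j) - b j)" by (simp add: sum_negf[symmetric])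
  also have "(\<Sum>j=m..2*m. b (Suc j) - b j) = b (Suc (2*m)) - b m" by (rule sum_Suc_diff) simp
  finally show ?thesis unfolding b_def by (simp add: binomial_eq_0)
qed

lemma PM_bound: "(\<Sum>k\<le>degree (PM (2*m)). cmod (coeff (PM (2*m)) k)) \<le> 2 * real ((2*m) choose m)"
proof -
  have "(\<Sum>k\<le>degree (PM (2*m)). cmod (coeff (PM (2*m)) k)) \<le> (\<Sum>k\<le>Suc (2*m). cmod (coeff (PM (2*m)) k))"
    by (rule sum_mono2) (use degree_PM in auto)
  also have "\<dots> = 1 + (\<Sum>j\<le>2*m. cmod (coeff (PM (2*m)) (Suc j)))"
    by (subst sum.atMost_Suc_shift) (simp add: coeff_PM)
  also have "(\<Sum>j\<le>2*m. cmod (coeff (PM (2*m)) (Suc j))) = (\<Sum>j\<le>2*m. \<bar>real ((2*m) choose j) - real ((2*m) choose Suc j)\<bar>)"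
  proof (rule sum.cong)
    fix j
    have "cmod ((-1)^j * (of_nat ((2*m) choose j) - of_nat ((2*m) choose Suc j)))
       = cmod (of_real (real ((2*m) choose j) - real ((2*m) choose Suc j)))"
      by (simp add: norm_mult norm_power)
    then show "cmod (coeff (PM (2*m)) (Suc j)) = \<bar>real ((2*m) choose j) - real ((2*m) choose Suc j)\<bar>"
      unfolding coeff_PM by (simp only: norm_of_real)
  qed simp
  also have "\<dots> = 2 * real ((2*m) choose m) - 1" by (rule telescope_bound)
  finally show ?thesis by simp
qed

locale sq_setup =
  fixes a p :: "'a::cstar_algebra"
  assumes adj_a: "adj a = a" and adj_p: "adj p = p" and ap: "a * p = p * a"
    and pp: "p * p = scaleR 2 p - a * a"
begin

definition Bo :: "'a \<Rightarrow> 'a" where "Bo y = y - y * p"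
definition To :: "'a \<Rightarrow> 'a" where "To y = y * a"
definition So :: "'a \<Rightarrow> 'a" where "So y = y * a + scaleC \<i> (Bo y)"

lemma So_adj: "So y * adj (So y) = y * adj y"
proof -
  define y' where "y' = adj y"
  define u where "u = y - y * p"
  define u' where "u' = y' - p * y'"
  have adjS: "adj (So y) = a * y' + scaleC (- \<i>) u'"
    unfolding So_def Bo_def y'_def u'_def
    by (simp add: adj_add adj_mult adj_scaleC adj_diff adj_a adj_p)
  have e1: "So y * adj (So y) = y*a*(a*y') + scaleC (- \<i>) (y*a*u') + scaleC \<i> (u*(a*y')) + u*u'"
    unfolding adjS unfolding So_def Bo_def u_def[symmetric]
    by (simp add: distrib_left distrib_right scaleC_mult_left scaleC_mult_right scaleC_scaleC scaleC_one add.assoc scaleC_add_right)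
  have pa: "p*(a*z) = a*(p*z)" for z by (metis ap mult.assoc)
  have e2: "y*a*u' = u*(a*y')"
    unfolding u_def u'_def by (simp add: algebra_simps pa)
  have "u*u' = y*y' - y*p*y' - y*p*y' + y*(p*p)*y'"
    unfolding u_def u'_def by (simp add: algebra_simps)
  also have "\<dots> = y*y' - y*(a*a)*y'"
    unfolding pp by (simp add: algebra_simps scaleR_2)
  finally have e3: "u*u' = y*y' - y*(a*a)*y'" .
  have e4: "scaleC (- \<i>) (y*a*u') + scaleC \<i> (u*(a*y')) = 0"
    unfolding e2 by (simp add: scaleC_minus_left)
  show ?thesis unfolding e1 e3 y'_def[symmetric] using e4
    by (simp add: algebra_simps)
qed


lemma pa_comm: "p * a = a * p" "p * (a * z) = a * (p * z)"
  using ap by (simp_all add: mult.assoc[symmetric])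

lemmas csimps = scaleC_add_right scaleC_diff_right scaleC_mult_left scaleC_mult_right scaleC_scaleC
  scaleC_one scaleC_minus_left scaleC_minus_right

lemma ii: "scaleC \<i> (scaleC \<i> z) = - z"
  by (simp add: scaleC_scaleC scaleC_minus_left scaleC_one)

lemma norm_So: "norm (So y) = norm y"
proof -
  have "norm (So y) * norm (So y) = norm y * norm y"
    using cstar_identity'[of "So y"] cstar_identity'[of y] So_adj by simp
  then show ?thesis by (metis norm_ge_zero mult_less_cancel_right2 mult_right_less_imp_less
       abs_of_nonneg real_sqrt_abs real_sqrt_mult_self power2_eq_square)
qed

lemma Bo_add: "Bo (y + z) = Bo y + Bo z" unfolding Bo_def by (simp add: algebra_simps)
lemma To_add: "To (y + z) = To y + To z" unfolding To_def by (simp add: algebra_simps)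
lemma So_add: "So (y + z) = So y + So z" unfolding So_def by (simp add: algebra_simps Bo_add scaleC_add_right)
lemma Bo_sc: "Bo (scaleC c y) = scaleC c (Bo y)" unfolding Bo_def by (simp add: csimps)
lemma To_sc: "To (scaleC c y) = scaleC c (To y)" unfolding To_def by (simp add: csimps)
lemma So_sc: "So (scaleC c y) = scaleC c (So y)" unfolding So_def
  by (simp add: Bo_sc scaleC_add_right scaleC_mult_left scaleC_scaleC mult.commute)
lemma Bo_mult: "Bo (y * z) = y * Bo z" unfolding Bo_def by (simp add: algebra_simps)
lemma To_mult: "To (y * z) = y * To z" unfolding To_def by (simp add: algebra_simps)

lemma So_To: "So (To y) = To (So y)"
  unfolding So_def To_def Bo_def by (simp add: csimps algebra_simps pa_comm)
lemma So_Bo: "So (Bo y) = Bo (So y)"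
  unfolding So_def To_def Bo_def by (simp add: csimps algebra_simps pa_comm)
lemma To_Bo: "To (Bo y) = Bo (To y)"
  unfolding To_def Bo_def by (simp add: algebra_simps pa_comm)

lemma TS: "To (So y) + To (So y) = So (So y) + y"
  unfolding So_def To_def Bo_def by (simp add: csimps algebra_simps pa_comm pp scaleR_2)

lemma BS: "Bo (So y) + Bo (So y) = scaleC \<i> (y - So (So y))"
  unfolding So_def To_def Bo_def by (simp add: csimps algebra_simps pa_comm pp scaleR_2)


definition Ro :: "'a \<Rightarrow> 'a" where "Ro y = So (So y)"

lemma So_0: "So 0 = 0" using So_add[of 0 0] by simp
lemma So_minus: "So (- y) = - So y"
  using So_sc[of "-1" y] by (simp add: scaleC_minus_left scaleC_one)
lemma So_diff: "So (y - z) = So y - So z"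
  by (simp only: diff_conv_add_uminus So_add So_minus)
lemma So_sum: "So (sum f A) = sum (\<lambda>i. So (f i)) A"
  by (induction A rule: infinite_finite_induct) (auto simp: So_add So_0)

lemma Ro_add: "Ro (y + z) = Ro y + Ro z" unfolding Ro_def by (simp add: So_add)
lemma Ro_sc: "Ro (scaleC c y) = scaleC c (Ro y)" unfolding Ro_def by (simp add: So_sc)
lemma Ro_sum: "Ro (sum f A) = sum (\<lambda>i. Ro (f i)) A" unfolding Ro_def by (simp add: So_sum)
lemma Ro_minus: "Ro (- y) = - Ro y" unfolding Ro_def by (simp add: So_minus)
lemma Ro_diff: "Ro (y - z) = Ro y - Ro z" unfolding Ro_def by (simp add: So_diff)
lemma norm_Rok: "norm ((Ro ^^ k) y) = norm y"
  by (induction k) (simp_all add: Ro_def norm_So)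
lemma norm_Sok: "norm ((So ^^ k) y) = norm y"
  by (induction k) (simp_all add: norm_So)

definition ev :: "complex poly \<Rightarrow> 'a \<Rightarrow> 'a" where
  "ev P y = (\<Sum>k\<le>degree P. scaleC (coeff P k) ((Ro ^^ k) y))"

lemma ev_eq:
  assumes "degree P \<le> n"
  shows "ev P y = (\<Sum>k\<le>n. scaleC (coeff P k) ((Ro ^^ k) y))"
  unfolding ev_def
proof (rule sum.mono_neutral_left)
  show "\<forall>i\<in>{..n} - {..degree P}. scaleC (coeff P i) ((Ro ^^ i) y) = 0"
    by (auto simp: coeff_eq_0)
qed (use assms in auto)

lemma ev_add: "ev (P + Q) y = ev P y + ev Q y"
proof -
  define n where "n = max (degree P) (degree Q)"
  have "degree (P + Q) \<le> n" "degree P \<le> n" "degree Q \<le> n"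
    unfolding n_def using degree_add_le_max[of P Q] by auto
  then show ?thesis
    by (simp add: ev_eq[of _ n] scaleC_add_left sum.distrib)
qed

lemma ev_smult: "ev (smult c P) y = scaleC c (ev P y)"
proof -
  have "degree (smult c P) \<le> degree P" by simp
  then show ?thesis
    by (simp add: ev_eq[of _ "degree P"] ev_def scaleC_sum_right scaleC_scaleC)
qed

lemma ev_shift: "ev (pCons 0 P) y = Ro (ev P y)"
proof -
  have d: "degree (pCons 0 P) \<le> Suc (degree P)" by simp
  have "ev (pCons 0 P) y = (\<Sum>k\<le>Suc (degree P). scaleC (coeff (pCons 0 P) k) ((Ro ^^ k) y))"
    by (rule ev_eq[OF d])
  also have "\<dots> = (\<Sum>k\<le>degree P. scaleC (coeff P k) ((Ro ^^ Suc k) y))"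
    by (subst sum.atMost_Suc_shift) simp
  also have "\<dots> = Ro (ev P y)"
    unfolding ev_def Ro_sum by (simp add: Ro_sc)
  finally show ?thesis .
qed

lemma ev_one_minus: "ev ([:1, -1:] * Q) y = ev Q y - Ro (ev Q y)"
proof -
  have e: "[:1, -1:] * Q = Q + pCons 0 (smult (-1) Q)" by (simp add: mult_pCons_left)
  have h: "ev (pCons 0 (smult (-1) Q)) y = - Ro (ev Q y)"
    by (simp only: ev_shift ev_smult Ro_sc scaleC_minus_left scaleC_one Ro_minus)
  show ?thesis unfolding e ev_add h by simp
qed

lemma ev_one_plus: "ev ([:1, 1:] * Q) y = ev Q y + Ro (ev Q y)"
proof -
  have "[:1, 1:] * Q = Q + pCons 0 Q" by (simp add: mult_pCons_left)
  then show ?thesis by (simp add: ev_add ev_shift)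
qed

lemma norm_ev: "norm (ev P y) \<le> (\<Sum>k\<le>degree P. cmod (coeff P k)) * norm y"
  unfolding ev_def sum_distrib_right
  by (rule order.trans[OF norm_sum]) (simp add: norm_scaleC norm_Rok)


lemma half: "w + w = v \<Longrightarrow> w = scaleC (1/2) v"
proof -
  assume h: "w + w = v"
  have "scaleC (1/2) v = scaleC (1/2) w + scaleC (1/2) w" unfolding h[symmetric] by (rule scaleC_add_right)
  also have "\<dots> = scaleC (1/2 + 1/2) w" by (simp only: scaleC_add_left)
  also have "\<dots> = w" by (simp add: scaleC_one)
  finally show ?thesis by simp
qed

lemma BS': "Bo (So z) = scaleC (\<i>/2) (z - Ro z)"
  using half[OF BS[of z]] unfolding Ro_def by (simp add: scaleC_scaleC)
lemma TS': "To (So z) = scaleC (1/2) (z + Ro z)"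
  using half[OF TS[of z]] unfolding Ro_def by (simp add: add.commute)

lemma Sok_Bo: "(So ^^ m) (Bo z) = Bo ((So ^^ m) z)"
  by (induction m) (simp_all add: So_Bo)
lemma Sok_To: "(So ^^ m) (To z) = To ((So ^^ m) z)"
  by (induction m) (simp_all add: So_To)

lemma ev_1: "ev 1 y = y" by (simp add: ev_def scaleC_one)

lemma SB: "(So ^^ m) ((Bo ^^ m) y) = scaleC ((\<i>/2)^m) (ev ([:1,-1:]^m) y)"
proof (induction m)
  case 0 then show ?case by (simp add: ev_1 scaleC_one)
next
  case (Suc m)
  have "(So ^^ Suc m) ((Bo ^^ Suc m) y) = So (Bo ((So ^^ m) ((Bo ^^ m) y)))"
    by (simp add: Sok_Bo)
  also have "\<dots> = Bo (So ((So ^^ m) ((Bo ^^ m) y)))" by (simp add: So_Bo)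
  also have "\<dots> = scaleC (\<i>/2) (scaleC ((\<i>/2)^m) (ev ([:1,-1:]^m) y) - Ro (scaleC ((\<i>/2)^m) (ev ([:1,-1:]^m) y)))"
    unfolding BS' Suc ..
  also have "\<dots> = scaleC ((\<i>/2)^Suc m) (ev ([:1,-1:] * [:1,-1:]^m) y)"
    unfolding ev_one_minus Ro_sc by (simp add: scaleC_diff_right scaleC_scaleC)
  finally show ?case by simp
qed

lemma STB: "(So ^^ Suc M) (To ((Bo ^^ M) y)) = scaleC ((1/2) * (\<i>/2)^M) (ev ([:1,1:] * [:1,-1:]^M) y)"
proof -
  have "(So ^^ Suc M) (To ((Bo ^^ M) y)) = So (To ((So ^^ M) ((Bo ^^ M) y)))"
    by (simp add: Sok_To)
  also have "\<dots> = To (So ((So ^^ M) ((Bo ^^ M) y)))" by (simp add: So_To)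
  also have "\<dots> = scaleC (1/2) (scaleC ((\<i>/2)^M) (ev ([:1,-1:]^M) y) + Ro (scaleC ((\<i>/2)^M) (ev ([:1,-1:]^M) y)))"
    unfolding TS' SB ..
  also have "\<dots> = scaleC ((1/2) * (\<i>/2)^M) (ev ([:1,1:] * [:1,-1:]^M) y)"
    unfolding ev_one_plus Ro_sc by (simp add: scaleC_add_right scaleC_scaleC)
  finally show ?thesis .
qed

lemma norm_TB: "norm (To ((Bo ^^ M) y)) \<le> (1/2)^(Suc M) *
   ((\<Sum>k\<le>degree (PM M). cmod (coeff (PM M) k)) * norm y)"
proof -
  have "norm (To ((Bo ^^ M) y)) = norm ((So ^^ Suc M) (To ((Bo ^^ M) y)))" by (simp only: norm_Sok)
  also have "\<dots> = norm (scaleC ((1/2) * (\<i>/2)^M) (ev (PM M) y))"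
    unfolding STB PM_def ..
  also have "\<dots> = (1/2)^(Suc M) * norm (ev (PM M) y)"
    by (simp add: norm_scaleC norm_mult norm_power norm_divide)
  also have "\<dots> \<le> (1/2)^(Suc M) * ((\<Sum>k\<le>degree (PM M). cmod (coeff (PM M) k)) * norm y)"
    by (rule mult_left_mono[OF norm_ev]) simp
  finally show ?thesis .
qed


lemma Bo_comm: "p * v = v * p \<Longrightarrow> p * Bo v = Bo v * p"
proof -
  assume h: "p * v = v * p"
  have "p * (v * p) = v * (p * p)" by (metis h mult.assoc)
  then show ?thesis unfolding Bo_def by (simp add: algebra_simps h)
qed
lemma Bo_adj: "adj v = v \<Longrightarrow> p * v = v * p \<Longrightarrow> adj (Bo v) = Bo v"
  unfolding Bo_def by (simp add: adj_diff adj_mult adj_p)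
lemma Bok_props: "p * (Bo ^^ k) a = (Bo ^^ k) a * p \<and> adj ((Bo ^^ k) a) = (Bo ^^ k) a"
  by (induction k) (simp_all add: pa_comm adj_a Bo_comm Bo_adj)
lemma Bok_mult: "(Bo ^^ k) (y * z) = y * (Bo ^^ k) z"
  by (induction k) (simp_all add: Bo_mult)
lemma To_Bok: "To ((Bo ^^ k) v) = (Bo ^^ k) (To v)"
  by (induction k) (simp_all add: To_Bo)

lemma u_bound: "norm ((Bo ^^ (2*m)) a) \<le> real ((2*m) choose m) / 4^m"
proof -
  define M where "M = 2*m"
  define u where "u = (Bo ^^ M) a"
  have adju: "adj u = u" unfolding u_def using Bok_props by blast
  have uu: "u * u = To ((Bo ^^ M) u)"
  proof -
    have "u * u = (Bo ^^ M) (u * a)" unfolding u_def[of] by (simp add: Bok_mult u_def)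
    also have "\<dots> = (Bo ^^ M) (To u)" by (simp add: To_def)
    also have "\<dots> = To ((Bo ^^ M) u)" by (simp add: To_Bok)
    finally show ?thesis .
  qed
  have "norm u * norm u = norm (u * u)" using cstar_identity'[of u] adju by simp
  also have "\<dots> \<le> (1/2)^(Suc M) * ((\<Sum>k\<le>degree (PM M). cmod (coeff (PM M) k)) * norm u)"
    unfolding uu by (rule norm_TB)
  also have "\<dots> \<le> (1/2)^(Suc M) * ((2 * real ((2*m) choose m)) * norm u)"
    unfolding M_def by (intro mult_left_mono mult_right_mono PM_bound) simp_all
  also have "\<dots> = (real ((2*m) choose m) / 4^m) * norm u"
  proof -
    have q: "(1/2::real)^(Suc (2*m)) = 1 / (2 * 4^m)"
      by (induction m) (simp_all add: field_simps)
    show ?thesis unfolding M_def q by simp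
  qed
  finally have h: "norm u * norm u \<le> (real ((2*m) choose m) / 4^m) * norm u" .
  show ?thesis
  proof (cases "norm u = 0")
    case True then show ?thesis unfolding u_def M_def by simp
  next
    case False
    then have "norm u > 0" by simp
    from mult_right_le_imp_le[OF h this] show ?thesis unfolding u_def M_def .
  qed
qed


definition Lo :: "'a \<Rightarrow> 'a" where "Lo w = w - p * w"

lemma adj_Bok: "adj ((Bo ^^ m) y) = (Lo ^^ m) (adj y)"
  by (induction m) (simp_all add: Bo_def Lo_def adj_diff adj_mult adj_p)
lemma Lok_mult: "(Lo ^^ m) w * v = (Lo ^^ m) (w * v)"
  by (induction m) (simp_all add: Lo_def algebra_simps)
lemma Lok_Bok: "(Lo ^^ j) ((Bo ^^ k) a) = (Bo ^^ (j + k)) a"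
proof (induction j)
  case (Suc j)
  have lb: "Lo w = Bo w" if "p * w = w * p" for w using that by (simp add: Lo_def Bo_def)
  have "(Lo ^^ Suc j) ((Bo ^^ k) a) = Lo ((Bo ^^ (j + k)) a)" using Suc by simp
  also have "\<dots> = Bo ((Bo ^^ (j + k)) a)" using Bok_props[of "j+k"] lb by blast
  finally show ?case by simp
qed simp

lemma z_bound:
  assumes "a = x * adj x"
  shows "norm ((Bo ^^ m) (adj x)) * norm ((Bo ^^ m) (adj x)) \<le> real ((2*m) choose m) / 4^m"
proof -
  define z where "z = (Bo ^^ m) (adj x)"
  have "adj z * z = (Lo ^^ m) (x * (Bo ^^ m) (adj x))"
    unfolding z_def adj_Bok adj_adj Lok_mult ..
  also have "\<dots> = (Bo ^^ (2*m)) a" unfolding Bok_mult[symmetric] assms[symmetric] Lok_Bok by (simp add: mult_2)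
  finally have "norm z * norm z = norm ((Bo ^^ (2*m)) a)" using cstar_identity[of z] by simp
  then show ?thesis using u_bound[of m] unfolding z_def by simp
qed

lemma mem_diff:
  assumes "closed_ideal I" "y * p \<in> I"
  shows "y - (Bo ^^ m) y \<in> I"
proof (induction m)
  case 0 then show ?case using ideal_0[OF assms(1)] by simp
next
  case (Suc m)
  define w where "w = (Bo ^^ m) y"
  have "w * p = y * p - (y - w) * p" by (simp add: algebra_simps)
  also have "\<dots> \<in> I" using Suc unfolding w_def by (rule ideal_diff[OF assms(1) assms(2) ideal_multR[OF assms(1)]])
  finally have wp: "w * p \<in> I" .
  have yw: "y - w \<in> I" using Suc unfolding w_def .
  have mem: "(y - w) + w * p \<in> I" by (rule ideal_add[OF assms(1) yw wp])
  have e1: "(Bo ^^ Suc m) y = w - w * p" unfolding w_def by (simp add: Bo_def)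
  have e2: "y - (Bo ^^ Suc m) y = (y - w) + w * p" unfolding e1 by (simp add: algebra_simps)
  show ?case unfolding e2 by (rule mem)
qed

end

lemma central_ratio: "(Suc m) * ((2 * Suc m) choose Suc m) = 2 * (2*m+1) * ((2*m) choose m)"
proof -
  define C where "C = (2*m) choose m"
  define D where "D = (Suc (2*m)) choose m"
  define E where "E = (2 * Suc m) choose Suc m"
  have a: "Suc (Suc (2*m)) * D = E * Suc m"
    unfolding D_def E_def using Suc_times_binomial_eq[of "Suc (2*m)" m] by simp
  have b: "Suc (2*m) * C = D * Suc m"
    unfolding C_def D_def using Suc_times_binomial_eq[of "2*m" m] binomial_symmetric[of "Suc m" "Suc (2*m)"]
    by simp
  have "Suc m * (Suc m * E) = Suc m * (2 * (2*m+1) * C)"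
  proof -
    have "Suc m * (Suc m * E) = Suc m * (Suc (Suc (2*m)) * D)" using a by (simp add: algebra_simps)
    also have "\<dots> = Suc (Suc (2*m)) * (D * Suc m)" by (simp only: mult.commute mult.left_commute)
    also have "\<dots> = Suc (Suc (2*m)) * (Suc (2*m) * C)" unfolding b ..
    also have "\<dots> = Suc m * (2 * (2*m+1) * C)" by (simp add: algebra_simps)
    finally show ?thesis .
  qed
  then have "Suc m * E = 2 * (2*m+1) * C" by (simp only: mult_left_cancel nat.distinct(1) Zero_not_Suc)
  then show ?thesis unfolding C_def E_def .
qed

lemma ratio_real: "q > 0 \<Longrightarrow> t \<ge> 0 \<Longrightarrow> C * (2 * (2 * t + 1)) / (t + 1) / (4 * q) = C / q * ((2 * t + 1) / (2 * t + 2))"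
  for q t C :: real
proof -
  assume q: "q > 0" and t: "t \<ge> 0"
  have "C * (2 * (2 * t + 1)) / (t + 1) / (4 * q) = C * (2 * (2 * t + 1)) / ((t + 1) * (4 * q))"
    by (rule divide_divide_eq_left)
  also have "\<dots> = (2 * (C * (2 * t + 1))) / (2 * (q * (2 * t + 2)))"
    by (rule arg_cong2[where f="(/)"]) (simp_all add: algebra_simps)
  also have "\<dots> = (C * (2 * t + 1)) / (q * (2 * t + 2))" by (rule mult_divide_mult_cancel_left) simp
  also have "\<dots> = C / q * ((2 * t + 1) / (2 * t + 2))" by simp
  finally show ?thesis .
qed

lemma central_decay: "(real ((2*m) choose m) / 4^m)^2 \<le> 1 / (3 * real m + 1)"
proof (induction m)
  case (Suc m)
  define c where "c = real ((2*m) choose m) / 4^m"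
  have r: "real ((2 * Suc m) choose Suc m) = real ((2*m) choose m) * (2 * (2 * real m + 1)) / (real m + 1)"
    using arg_cong[OF central_ratio[of m], of real] by (simp add: field_simps)
  have cs: "real ((2 * Suc m) choose Suc m) / 4^Suc m = c * ((2 * real m + 1) / (2 * real m + 2))"
    unfolding r c_def using ratio_real[of "4^m" "real m" "real ((2*m) choose m)"] by simp
  have c2: "c^2 \<le> 1 / (3 * real m + 1)" using Suc unfolding c_def .
  have "(c * ((2 * real m + 1) / (2 * real m + 2)))^2 = c^2 * ((2 * real m + 1) / (2 * real m + 2))^2"
    by (rule power_mult_distrib)
  also have "\<dots> \<le> 1 / (3 * real m + 1) * ((2 * real m + 1) / (2 * real m + 2))^2"
    by (rule mult_right_mono[OF c2]) simp
  also have "\<dots> \<le> 1 / (3 * real (Suc m) + 1)"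
  proof -
    define t where "t = real m"
    have t0: "t \<ge> 0" unfolding t_def by simp
    have pi: "(2 * t + 1)^2 * (3 * t + 4) \<le> (3 * t + 1) * (2 * t + 2)^2"
      using t0 by (simp add: power2_eq_square algebra_simps)
    have D: "0 < (3 * t + 1) * (2 * t + 2)^2" using t0 by (intro mult_pos_pos) auto
    have e: "1 / (3 * t + 1) * ((2 * t + 1) / (2 * t + 2))^2 = (2 * t + 1)^2 / ((3 * t + 1) * (2 * t + 2)^2)"
      by (simp add: power_divide)
    have "(2 * t + 1)^2 / ((3 * t + 1) * (2 * t + 2)^2) \<le> 1 / (3 * t + 4)"
    proof (subst pos_divide_le_eq[OF D])
      show "(2 * t + 1)^2 \<le> 1 / (3 * t + 4) * ((3 * t + 1) * (2 * t + 2)^2)"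
        using pi t0 by (simp add: pos_le_divide_eq)
    qed
    then show ?thesis using e unfolding t_def by (simp add: algebra_simps)
  qed
  finally show ?case unfolding cs .
qed simp


lemma ideal_adj_small:
  fixes x :: "'a::cstar_algebra"
  assumes iI: "closed_ideal I" and xI: "x \<in> I" and nx: "norm x \<le> 1/2"
  shows "adj x \<in> I"
proof -
  define a where "a = x * adj x"
  define s where "s = a * a"
  have adj_a: "adj a = a" unfolding a_def by (simp add: adj_mult adj_adj)
  have na: "norm a \<le> 1/4"
  proof -
    have "norm a = norm x * norm x" unfolding a_def by (rule cstar_identity')
    also have "\<dots> \<le> (1/2) * (1/2)" using nx by (intro mult_mono) auto
    finally show ?thesis by simp
  qed
  have ns: "norm s \<le> 1/16"
  proof -
    have "norm s \<le> norm a * norm a" unfolding s_def by (rule norm_mult_ineq)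
    also have "\<dots> \<le> (1/4) * (1/4)" using na by (intro mult_mono) auto
    finally show ?thesis by simp
  qed
  define F where "F q = scaleR (1/2) (s + q * q)" for q
  define C where "C = {q. norm q \<le> 1/4} \<inter> {q. a * q = q * a} \<inter> {q. adj q = q} \<inter> {q. adj x * q \<in> I}"
  have cadj: "continuous_on UNIV adj"
    by (rule continuous_at_imp_continuous_on) (simp add: continuous_adj)
  have closedC: "closed C"
    unfolding C_def
  proof (intro closed_Int)
    show "closed {q::'a. norm q \<le> 1/4}" by (intro closed_Collect_le continuous_intros)
    show "closed {q. a * q = q * a}" by (intro closed_Collect_eq continuous_intros)
    show "closed {q. adj q = q}" by (intro closed_Collect_eq continuous_intros cadj)
    have "{q. adj x * q \<in> I} = (\<lambda>q. adj x * q) -` I" by auto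
    also have "closed \<dots>" by (intro continuous_closed_vimage ideal_closed[OF iI] continuous_intros)
    finally show "closed {q. adj x * q \<in> I}" .
  qed
  have C0: "0 \<in> C" unfolding C_def using ideal_0[OF iI] by simp
  have FC: "F ` C \<subseteq> C"
  proof
    fix z assume "z \<in> F ` C"
    then obtain q where q: "q \<in> C" "z = F q" by blast
    have nq: "norm q \<le> 1/4" and aq: "a * q = q * a" and adjq: "adj q = q" and xq: "adj x * q \<in> I"
      using q(1) unfolding C_def by auto
    have "norm (F q) = (1/2) * norm (s + q * q)" unfolding F_def by simp
    also have "\<dots> \<le> (1/2) * (norm s + norm q * norm q)"
      by (intro mult_left_mono order.trans[OF norm_triangle_ineq] add_left_mono norm_mult_ineq) simp
    also have "\<dots> \<le> (1/2) * (1/16 + (1/4) * (1/4))"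
      using ns nq by (intro mult_left_mono add_mono mult_mono) auto
    finally have n1: "norm (F q) \<le> 1/4" by simp
    have "a * (s + q * q) = (s + q * q) * a"
    proof -
      have "a * s = s * a" unfolding s_def by (simp add: mult.assoc)
      moreover have "a * (q * q) = (q * q) * a" by (metis aq mult.assoc)
      ultimately show ?thesis by (simp add: distrib_left distrib_right)
    qed
    then have n2: "a * F q = F q * a" unfolding F_def by (simp add: mult_scaleR_left mult_scaleR_right)
    have n3: "adj (F q) = F q" unfolding F_def s_def
      by (simp add: adj_scaleR adj_add adj_mult adj_a adjq)
    have "adj x * s = adj x * (x * (adj x * (x * adj x)))" unfolding s_def a_def by (simp add: mult.assoc)
    also have "\<dots> \<in> I" by (intro ideal_multL[OF iI] ideal_multR[OF iI] xI)
    finally have xs: "adj x * s \<in> I" .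
    have "adj x * F q = scaleR (1/2) (adj x * s + (adj x * q) * q)"
      unfolding F_def by (simp add: mult_scaleR_right distrib_left mult.assoc)
    also have "\<dots> \<in> I" by (intro ideal_scaleR[OF iI] ideal_add[OF iI] xs ideal_multR[OF iI] xq)
    finally have n4: "adj x * F q \<in> I" .
    show "z \<in> C" unfolding q(2) C_def using n1 n2 n3 n4 by simp
  qed
  have lip: "dist (F q) (F q') \<le> (1/2) * dist q q'" if "q \<in> C" "q' \<in> C" for q q'
  proof -
    have nq: "norm q \<le> 1/4" "norm q' \<le> 1/4" using that unfolding C_def by auto
    have "F q - F q' = scaleR (1/2) (q * (q - q') + (q - q') * q')"
    proof -
      have "(s + q * q) - (s + q' * q') = q * (q - q') + (q - q') * q'" by (simp add: algebra_simps)
      then show ?thesis unfolding F_def scaleR_diff_right[symmetric] by simp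
    qed
    then have "dist (F q) (F q') = (1/2) * norm (q * (q - q') + (q - q') * q')"
      by (simp add: dist_norm)
    also have "\<dots> \<le> (1/2) * (norm q * norm (q - q') + norm (q - q') * norm q')"
      by (intro mult_left_mono order.trans[OF norm_triangle_ineq] add_mono norm_mult_ineq) simp_all
    also have "\<dots> \<le> (1/2) * ((1/4) * norm (q - q') + norm (q - q') * (1/4))"
      using nq by (intro mult_left_mono add_mono mult_right_mono mult_left_mono) auto
    also have "\<dots> \<le> (1/2) * dist q q'" by (simp add: dist_norm)
    finally show ?thesis .
  qed
  have "\<exists>!p\<in>C. F p = p"
  proof (rule Banach_fix[of C "1/2" F])
    show "complete C" using closedC complete_eq_closed by blast
    show "C \<noteq> {}" using C0 by blast
  qed (use FC lip in auto)
  then obtain p where pC: "p \<in> C" and Fp: "F p = p" by blast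
  have np: "adj p = p" "a * p = p * a" "adj x * p \<in> I" using pC unfolding C_def by auto
  have pp: "p * p = scaleR 2 p - a * a"
  proof -
    have "scaleR 2 p = scaleR 2 (F p)" using Fp by simp
    also have "\<dots> = s + p * p" unfolding F_def by simp
    finally show ?thesis unfolding s_def by simp
  qed
  interpret S: sq_setup a p
    by unfold_locales (use adj_a np pp in auto)
  define z where "z m = (S.Bo ^^ m) (adj x)" for m
  have memz: "adj x - z m \<in> I" for m unfolding z_def by (rule S.mem_diff[OF iI np(3)])
  have zb: "norm (z m) \<le> sqrt (sqrt (inverse (real (Suc m))))" for m
  proof -
    define c where "c = real ((2*m) choose m) / 4^m"
    have c0: "c \<ge> 0" unfolding c_def by simp
    have "norm (z m) * norm (z m) \<le> c" unfolding z_def c_def by (rule S.z_bound[OF a_def])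
    then have "norm (z m) \<le> sqrt c"
      by (intro real_le_rsqrt) (simp add: power2_eq_square)
    also have "c \<le> sqrt (inverse (real (Suc m)))"
    proof -
      have "c^2 \<le> 1 / (3 * real m + 1)" unfolding c_def by (rule central_decay)
      also have "\<dots> \<le> inverse (real (Suc m))" by (simp add: inverse_eq_divide frac_le)
      finally have "sqrt (c^2) \<le> sqrt (inverse (real (Suc m)))" by (rule real_sqrt_le_mono)
      then show ?thesis using c0 by simp
    qed
    then have "sqrt c \<le> sqrt (sqrt (inverse (real (Suc m))))" by (rule real_sqrt_le_mono)
    finally show ?thesis .
  qed
  have lim0: "(\<lambda>m. sqrt (sqrt (inverse (real (Suc m))))) \<longlonglongrightarrow> 0"
    using tendsto_real_sqrt[OF tendsto_real_sqrt[OF LIMSEQ_inverse_real_of_nat]] by simp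
  have "z \<longlonglongrightarrow> 0"
    by (rule Lim_null_comparison[OF _ lim0]) (use zb in \<open>intro always_eventually allI\<close>)
  then have "(\<lambda>m. adj x - z m) \<longlonglongrightarrow> adj x - 0" by (intro tendsto_intros)
  then have "(\<lambda>m. adj x - z m) \<longlonglongrightarrow> adj x" by simp
  then show "adj x \<in> I"
    by (rule closed_sequentially[OF ideal_closed[OF iI], of "\<lambda>m. adj x - z m", rotated]) (rule memz)
qed

lemma ideal_adj: "closed_ideal (I :: 'a::cstar_algebra set) \<Longrightarrow> x \<in> I \<Longrightarrow> adj x \<in> I"
proof -
  assume iI: "closed_ideal I" and xI: "x \<in> I"
  show "adj x \<in> I"
  proof (cases "x = 0")
    case True then show ?thesis using ideal_0[OF iI] by simp
  next
    case False
    define t where "t = 1 / (2 * norm x)"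
    have t0: "t > 0" unfolding t_def using False by simp
    have "norm (scaleR t x) = 1/2" unfolding t_def using False by simp
    then have "adj (scaleR t x) \<in> I" by (intro ideal_adj_small[OF iI] ideal_scaleR[OF iI xI]) simp
    then have "scaleR (1/t) (adj (scaleR t x)) \<in> I" by (rule ideal_scaleR[OF iI])
    also have "scaleR (1/t) (adj (scaleR t x)) = adj x" using t0 by (simp add: adj_scaleR)
    finally show ?thesis .
  qed
qed

lemma hom_add: "cstar_hom f \<Longrightarrow> f (x + y) = f x + f y" by (simp add: cstar_hom_def)
lemma hom_diff: "cstar_hom f \<Longrightarrow> f (x - y) = f x - f y"
proof -
  assume h: "cstar_hom f"
  have "f x = f (x - y) + f y" using hom_add[OF h, of "x - y" y] by simp
  then show ?thesis by (simp add: eq_diff_eq)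
qed
lemma hom_0: "cstar_hom f \<Longrightarrow> f 0 = 0"
  using hom_diff[of f 0 0] by simp

subsection \<open>Cosets in a full algebra\<close>

lemma coset_full: "coset full_alg I a = {a + n |n. n \<in> I}"
  by (simp add: coset_def full_alg_def)

lemma coset_eq_iff:
  assumes "closed_ideal I"
  shows "coset full_alg I a = coset full_alg I b \<longleftrightarrow> a - b \<in> I"
proof
  assume e: "coset full_alg I a = coset full_alg I b"
  have "a \<in> coset full_alg I a" unfolding coset_full using ideal_0[OF assms] by force
  then obtain n where "n \<in> I" "a = b + n" using e unfolding coset_full by auto
  then show "a - b \<in> I" by simp
next
  assume d: "a - b \<in> I"
  show "coset full_alg I a = coset full_alg I b"
  proof (rule set_eqI, unfold coset_full, rule iffI)
    fix z assume "z \<in> {a + n |n. n \<in> I}"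
    then obtain n where n: "n \<in> I" "z = a + n" by auto
    have "z = b + ((a - b) + n)" using n by simp
    moreover have "(a - b) + n \<in> I" using ideal_add[OF assms d n(1)] .
    ultimately show "z \<in> {b + n |n. n \<in> I}" by blast
  next
    fix z assume "z \<in> {b + n |n. n \<in> I}"
    then obtain n where n: "n \<in> I" "z = b + n" by auto
    have "z = a + (n - (a - b))" using n by simp
    moreover have "n - (a - b) \<in> I" using ideal_diff[OF assms n(1) d] .
    ultimately show "z \<in> {a + n |n. n \<in> I}" by blast
  qed
qed

lemma rep_coset:
  assumes "closed_ideal I"
  shows "rep (coset full_alg I a) - a \<in> I"
proof -
  have "a + 0 \<in> coset full_alg I a" unfolding coset_full using ideal_0[OF assms] by blast
  then have "rep (coset full_alg I a) \<in> coset full_alg I a"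
    unfolding rep_def by (rule someI)
  then obtain n where "n \<in> I" "rep (coset full_alg I a) = a + n" unfolding coset_full by auto
  then show ?thesis by simp
qed

lemma coset_rep:
  assumes "closed_ideal I"
  shows "coset full_alg I (rep (coset full_alg I a)) = coset full_alg I a"
  using rep_coset[OF assms] coset_eq_iff[OF assms] by blast

lemma q_add:
  assumes "closed_ideal I"
  shows "coset full_alg I (rep (coset full_alg I u) + rep (coset full_alg I v)) = coset full_alg I (u + v)"
proof -
  have "(rep (coset full_alg I u) + rep (coset full_alg I v)) - (u + v)
     = (rep (coset full_alg I u) - u) + (rep (coset full_alg I v) - v)" by simp
  also have "\<dots> \<in> I" by (intro ideal_add[OF assms] rep_coset[OF assms])
  finally show ?thesis using coset_eq_iff[OF assms] by blast
qed

lemma q_mult: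
  assumes "closed_ideal I"
  shows "coset full_alg I (rep (coset full_alg I u) * rep (coset full_alg I v)) = coset full_alg I (u * v)"
proof -
  define ru where "ru = rep (coset full_alg I u)"
  define rv where "rv = rep (coset full_alg I v)"
  have "ru * rv - u * v = (ru - u) * rv + u * (rv - v)" by (simp add: algebra_simps)
  also have "\<dots> \<in> I" unfolding ru_def rv_def
    by (intro ideal_add[OF assms] ideal_multR[OF assms] ideal_multL[OF assms] rep_coset[OF assms])
  finally show ?thesis using coset_eq_iff[OF assms] unfolding ru_def rv_def by blast
qed

lemma q_smul:
  assumes "closed_ideal I"
  shows "coset full_alg I (scaleC c (rep (coset full_alg I u))) = coset full_alg I (scaleC c u)"
proof -
  have "scaleC c (rep (coset full_alg I u)) - scaleC c u = scaleC c (rep (coset full_alg I u) - u)"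
    by (simp add: scaleC_diff_right)
  also have "\<dots> \<in> I" by (intro ideal_scaleC[OF assms] rep_coset[OF assms])
  finally show ?thesis using coset_eq_iff[OF assms] by blast
qed

lemma q_adj:
  assumes "closed_ideal I"
  shows "coset full_alg I (adj (rep (coset full_alg I u))) = coset full_alg I (adj u)"
proof -
  have "adj (rep (coset full_alg I u)) - adj u = adj (rep (coset full_alg I u) - u)"
    by (simp add: adj_diff)
  also have "\<dots> \<in> I" by (intro ideal_adj[OF assms] rep_coset[OF assms])
  finally show ?thesis using coset_eq_iff[OF assms] by blast
qed


subsection \<open>Pullback cosets\<close>

lemma pb_carr: "carr (pullback_alg full_alg full_alg f g) = {(x, y). f x = g y}"
  by (simp add: pullback_alg_def full_alg_def)
lemma pb_add: "add (pullback_alg full_alg full_alg f g) w w' = (fst w + fst w', snd w + snd w')"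
  by (simp add: pullback_alg_def full_alg_def case_prod_beta)
lemma pb_mul: "mul (pullback_alg full_alg full_alg f g) w w' = (fst w * fst w', snd w * snd w')"
  by (simp add: pullback_alg_def full_alg_def case_prod_beta)
lemma pb_smul: "smul (pullback_alg full_alg full_alg f g) c w = (scaleC c (fst w), scaleC c (snd w))"
  by (simp add: pullback_alg_def full_alg_def case_prod_beta)
lemma pb_invol: "invol (pullback_alg full_alg full_alg f g) w = (adj (fst w), adj (snd w))"
  by (simp add: pullback_alg_def full_alg_def case_prod_beta)

lemma pb_coset:
  "coset (pullback_alg full_alg full_alg f g) N w = {(fst w + fst n, snd w + snd n) | n. n \<in> N}"
  by (simp add: coset_def pb_add)

lemma quot_ops:
  "add (quot_alg R N) X Y = coset R N (add R (rep X) (rep Y))"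
  "mul (quot_alg R N) X Y = coset R N (mul R (rep X) (rep Y))"
  "smul (quot_alg R N) c X = coset R N (smul R c (rep X))"
  "invol (quot_alg R N) X = coset R N (invol R (rep X))"
  "carr (quot_alg R N) = {coset R N x | x. x \<in> carr R}"
  by (simp_all add: quot_alg_def)

lemma full_ops: "carr full_alg = UNIV" "add full_alg = (+)" "mul full_alg = (*)"
  "smul full_alg = scaleC" "invol full_alg = adj"
  by (simp_all add: full_alg_def)

lemma tgt_ops:
  "carr (pullback_alg R S f g) = {(x, y). x \<in> carr R \<and> y \<in> carr S \<and> f x = g y}"
  "add (pullback_alg R S f g) w w' = (add R (fst w) (fst w'), add S (snd w) (snd w'))"
  "mul (pullback_alg R S f g) w w' = (mul R (fst w) (fst w'), mul S (snd w) (snd w'))"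
  "smul (pullback_alg R S f g) c w = (smul R c (fst w), smul S c (snd w))"
  "invol (pullback_alg R S f g) w = (invol R (fst w), invol S (snd w))"
  by (simp_all add: pullback_alg_def case_prod_beta)

theorem proposition2p9:
  fixes \<phi> :: "'a::cstar_algebra \<Rightarrow> 'c::cstar_algebra"
    and \<psi> :: "'b::cstar_algebra \<Rightarrow> 'c"
    and I :: "'a set" and J :: "'b set" and K :: "'c set"
  assumes "cstar_hom \<phi>" and "cstar_hom \<psi>" and "surj \<phi>"
    and "closed_ideal I" and "closed_ideal J" and "closed_ideal K"
    and "\<phi> ` I = K" and "\<psi> ` J \<subseteq> K"
  shows "\<exists>\<gamma>.
     (\<forall>a b. \<phi> a = \<psi> b \<longrightarrow>
        \<gamma> (coset (pullback_alg full_alg full_alg \<phi> \<psi>)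
               {(x, y). \<phi> x = \<psi> y \<and> x \<in> I \<and> y \<in> J} (a, b))
        = (coset full_alg I a, coset full_alg J b)) \<and>
     star_iso
       (quot_alg (pullback_alg full_alg full_alg \<phi> \<psi>)
                 {(x, y). \<phi> x = \<psi> y \<and> x \<in> I \<and> y \<in> J})
       (pullback_alg (quot_alg full_alg I) (quot_alg full_alg J)
                     (quot_map full_alg I full_alg K \<phi>)
                     (quot_map full_alg J full_alg K \<psi>))
       \<gamma>"
proof -
  note hp = assms(1) and hq = assms(2) and iI = assms(4) and iJ = assms(5) and iK = assms(6)
  define Pb where "Pb = pullback_alg full_alg full_alg \<phi> \<psi>"
  define N where "N = {(x, y). \<phi> x = \<psi> y \<and> x \<in> I \<and> y \<in> J}"
  define Q where "Q = quot_alg Pb N"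
  define T where "T = pullback_alg (quot_alg full_alg I) (quot_alg full_alg J)
                     (quot_map full_alg I full_alg K \<phi>) (quot_map full_alg J full_alg K \<psi>)"
  define \<gamma> where "\<gamma> X = (coset full_alg I (fst (rep X)), coset full_alg J (snd (rep X)))" for X
  have N0: "(0, 0) \<in> N" unfolding N_def using hom_0[OF hp] hom_0[OF hq] ideal_0[OF iI] ideal_0[OF iJ] by simp
  have rep_pc: "\<exists>n\<in>N. rep (coset Pb N w) = (fst w + fst n, snd w + snd n)" for w
  proof -
    have "(fst w + fst (0,0), snd w + snd (0,0)) \<in> coset Pb N w"
      unfolding Pb_def pb_coset by (rule CollectI, rule exI[of _ "(0,0)"]) (simp add: N0)
    then have "rep (coset Pb N w) \<in> coset Pb N w" unfolding rep_def by (rule someI)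
    then show ?thesis unfolding Pb_def pb_coset by blast
  qed
  have gc: "\<gamma> (coset Pb N w) = (coset full_alg I (fst w), coset full_alg J (snd w))" for w
  proof -
    obtain n where n: "n \<in> N" "rep (coset Pb N w) = (fst w + fst n, snd w + snd n)"
      using rep_pc by blast
    have "fst n \<in> I" "snd n \<in> J" using n(1) unfolding N_def by auto
    then have "(fst w + fst n) - fst w \<in> I" "(snd w + snd n) - snd w \<in> J" by simp_all
    then show ?thesis unfolding \<gamma>_def n(2) using coset_eq_iff[OF iI] coset_eq_iff[OF iJ] by simp
  qed
  have pceq: "coset Pb N w = coset Pb N w'" if "(fst w - fst w', snd w - snd w') \<in> N" for w w'
  proof -
    have N_add: "(fst n + fst m, snd n + snd m) \<in> N" if "n \<in> N" "m \<in> N" for n m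
      using that unfolding N_def by (auto simp: hom_add[OF hp] hom_add[OF hq] ideal_add[OF iI] ideal_add[OF iJ])
    have N_minus: "(- fst n, - snd n) \<in> N" if "n \<in> N" for n
      using that hom_diff[OF hp, of 0] hom_diff[OF hq, of 0] hom_0[OF hp] hom_0[OF hq]
      unfolding N_def by (auto simp: ideal_minus[OF iI] ideal_minus[OF iJ])
    show ?thesis
    proof (rule set_eqI, unfold Pb_def pb_coset, rule iffI)
      fix z assume "z \<in> {(fst w + fst n, snd w + snd n) |n. n \<in> N}"
      then obtain n where n: "n \<in> N" "z = (fst w + fst n, snd w + snd n)" by auto
      have "(fst (fst w - fst w', snd w - snd w') + fst n, snd (fst w - fst w', snd w - snd w') + snd n) \<in> N"
        by (rule N_add[OF that n(1)])
      moreover have "z = (fst w' + (fst w - fst w' + fst n), snd w' + (snd w - snd w' + snd n))"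
        using n by simp
      ultimately show "z \<in> {(fst w' + fst n, snd w' + snd n) |n. n \<in> N}"
        by (intro CollectI exI[of _ "(fst w - fst w' + fst n, snd w - snd w' + snd n)"]) simp
    next
      fix z assume "z \<in> {(fst w' + fst n, snd w' + snd n) |n. n \<in> N}"
      then obtain n where n: "n \<in> N" "z = (fst w' + fst n, snd w' + snd n)" by auto
      have m: "(- (fst w - fst w'), - (snd w - snd w')) \<in> N" using N_minus[OF that] by simp
      have "(fst (- (fst w - fst w'), - (snd w - snd w')) + fst n, snd (- (fst w - fst w'), - (snd w - snd w')) + snd n) \<in> N"
        by (rule N_add[OF m n(1)])
      moreover have "z = (fst w + (- (fst w - fst w') + fst n), snd w + (- (snd w - snd w') + snd n))"
        using n by simp
      ultimately show "z \<in> {(fst w + fst n, snd w + snd n) |n. n \<in> N}"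
        by (intro CollectI exI[of _ "(- (fst w - fst w') + fst n, - (snd w - snd w') + snd n)"]) simp
    qed
  qed
  have carrQ: "X \<in> carr Q \<longleftrightarrow> (\<exists>a b. \<phi> a = \<psi> b \<and> X = coset Pb N (a, b))" for X
    unfolding Q_def quot_ops Pb_def pb_carr by auto
  have qm_phi: "quot_map full_alg I full_alg K \<phi> (coset full_alg I u) = coset full_alg K (\<phi> u)" for u
  proof -
    have "\<phi> (rep (coset full_alg I u)) - \<phi> u = \<phi> (rep (coset full_alg I u) - u)" by (simp add: hom_diff[OF hp])
    also have "\<dots> \<in> K" using rep_coset[OF iI, of u] assms(7) by blast
    finally show ?thesis unfolding quot_map_def using coset_eq_iff[OF iK] by blast
  qed
  have qm_psi: "quot_map full_alg J full_alg K \<psi> (coset full_alg J u) = coset full_alg K (\<psi> u)" for u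
  proof -
    have "\<psi> (rep (coset full_alg J u)) - \<psi> u = \<psi> (rep (coset full_alg J u) - u)" by (simp add: hom_diff[OF hq])
    also have "\<dots> \<in> K" using rep_coset[OF iJ, of u] assms(8) by blast
    finally show ?thesis unfolding quot_map_def using coset_eq_iff[OF iK] by blast
  qed
  have into: "\<gamma> X \<in> carr T" if "X \<in> carr Q" for X
  proof -
    from that[unfolded carrQ] obtain a b where ab: "\<phi> a = \<psi> b" "X = coset Pb N (a, b)" by blast
    have "coset full_alg I a \<in> carr (quot_alg full_alg I)" "coset full_alg J b \<in> carr (quot_alg full_alg J)"
      unfolding quot_ops full_ops by blast+
    moreover have "quot_map full_alg I full_alg K \<phi> (coset full_alg I a) = quot_map full_alg J full_alg K \<psi> (coset full_alg J b)"
      unfolding qm_phi qm_psi ab(1) ..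
    ultimately show ?thesis unfolding ab(2) gc T_def tgt_ops(1) by simp
  qed
  have hom: "star_hom Q T \<gamma>"
    unfolding star_hom_def
  proof (intro conjI ballI allI)
    show "\<gamma> x \<in> carr T" if "x \<in> carr Q" for x using into[OF that] .
  next
    fix X Y assume "X \<in> carr Q" "Y \<in> carr Q"
    show "\<gamma> (add Q X Y) = add T (\<gamma> X) (\<gamma> Y)"
      unfolding Q_def quot_ops gc[unfolded Q_def] unfolding Pb_def pb_add T_def tgt_ops quot_ops full_ops
      by (simp add: \<gamma>_def q_add[OF iI] q_add[OF iJ])
    show "\<gamma> (mul Q X Y) = mul T (\<gamma> X) (\<gamma> Y)"
      unfolding Q_def quot_ops gc[unfolded Q_def] unfolding Pb_def pb_mul T_def tgt_ops quot_ops full_ops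
      by (simp add: \<gamma>_def q_mult[OF iI] q_mult[OF iJ])
  next
    fix c X assume "X \<in> carr Q"
    show "\<gamma> (smul Q c X) = smul T c (\<gamma> X)"
      unfolding Q_def quot_ops gc[unfolded Q_def] unfolding Pb_def pb_smul T_def tgt_ops quot_ops full_ops
      by (simp add: \<gamma>_def q_smul[OF iI] q_smul[OF iJ])
  next
    fix X assume "X \<in> carr Q"
    show "\<gamma> (invol Q X) = invol T (\<gamma> X)"
      unfolding Q_def quot_ops gc[unfolded Q_def] unfolding Pb_def pb_invol T_def tgt_ops quot_ops full_ops
      by (simp add: \<gamma>_def q_adj[OF iI] q_adj[OF iJ])
  qed
  have inj: "inj_on \<gamma> (carr Q)"
  proof (rule inj_onI)
    fix X Y assume X: "X \<in> carr Q" and Y: "Y \<in> carr Q" and e: "\<gamma> X = \<gamma> Y"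
    from X[unfolded carrQ] obtain a b where ab: "\<phi> a = \<psi> b" "X = coset Pb N (a, b)" by blast
    from Y[unfolded carrQ] obtain a' b' where ab': "\<phi> a' = \<psi> b'" "Y = coset Pb N (a', b')" by blast
    have "a - a' \<in> I" "b - b' \<in> J" using e unfolding ab(2) ab'(2) gc
      using coset_eq_iff[OF iI] coset_eq_iff[OF iJ] by auto
    moreover have "\<phi> (a - a') = \<psi> (b - b')" using ab(1) ab'(1) hom_diff[OF hp] hom_diff[OF hq] by simp
    ultimately have "(fst (a, b) - fst (a', b'), snd (a, b) - snd (a', b')) \<in> N" unfolding N_def by simp
    then show "X = Y" unfolding ab(2) ab'(2) by (rule pceq)
  qed
  have surj: "carr T \<subseteq> \<gamma> ` carr Q"
  proof
    fix UV assume "UV \<in> carr T"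
    then obtain U V where UV: "UV = (U, V)" "U \<in> carr (quot_alg full_alg I)" "V \<in> carr (quot_alg full_alg J)"
      "quot_map full_alg I full_alg K \<phi> U = quot_map full_alg J full_alg K \<psi> V"
      unfolding T_def tgt_ops(1) by (cases UV) simp
    from UV(2) obtain u where u: "U = coset full_alg I u" unfolding quot_ops full_ops by blast
    from UV(3) obtain v where v: "V = coset full_alg J v" unfolding quot_ops full_ops by blast
    have "coset full_alg K (\<phi> u) = coset full_alg K (\<psi> v)" using UV(4) unfolding u v qm_phi qm_psi .
    then have "\<phi> u - \<psi> v \<in> K" using coset_eq_iff[OF iK] by blast
    then have "\<phi> u - \<psi> v \<in> \<phi> ` I" using assms(7) by simp
    then obtain i where i: "i \<in> I" "\<phi> i = \<phi> u - \<psi> v" by (metis imageE)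
    have e: "\<phi> (u - i) = \<psi> v" using i(2) hom_diff[OF hp] by simp
    have "coset full_alg I (u - i) = coset full_alg I u"
      using coset_eq_iff[OF iI] ideal_minus[OF iI i(1)] by simp
    then have "\<gamma> (coset Pb N (u - i, v)) = UV" unfolding gc UV(1) u v by simp
    moreover have "coset Pb N (u - i, v) \<in> carr Q" unfolding carrQ using e by blast
    ultimately show "UV \<in> \<gamma> ` carr Q" by blast
  qed
  have "star_iso Q T \<gamma>"
    unfolding star_iso_def bij_betw_def using hom inj surj into by blast
  moreover have "\<forall>a b. \<phi> a = \<psi> b \<longrightarrow> \<gamma> (coset Pb N (a, b)) = (coset full_alg I a, coset full_alg J b)"
    using gc by simp
  ultimately show ?thesis unfolding Q_def T_def Pb_def N_def by blast
qed

end
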